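(* For each $n\in\mathbb{N}$ let $D_n=\{(x,y)\in[0,n]^2: x\le y\}$, let $G_n:D_n\to\mathbb{R}$ be continuous, and let $(\mathcal{M}_1(n),\mathcal{M}_2(n))\in D_n$ be a point at which $G_n$ attains its maximum. Let $T=\{(x,y)\in\mathbb{R}^2: 0\le x\le y\le 1\}$ and define $h_n:T\to\mathbb{R}$ by $h_n(x,y)=G_n(nx,ny)$. Assume that $h_n$ converges uniformly on $T$ to a function $h$ and that $(\theta_1,\theta_2)$ is the only global maximum point of $h$ on $T$. Then: (i) $\lim_{n\to\infty}\mathcal{M}_i(n)/n=\theta_i$ for $i=1,2$; (ii) $\lim_{n\to\infty}G_n(\mathcal{M}_1(n),\mathcal{M}_2(n))=h(\theta_1,\theta_2)$; (iii) if $(\mathfrak{M}_1(n),\mathfrak{M}_2(n))\in D_n$ satisfy $\mathfrak{M}_i(n)\sim\mathcal{M}_i(n)$ (i.e. $\mathfrak{M}_i(n)/\mathcal{M}_i(n)\to1$) for $i=1,2$, then $\lim_{n\to\infty}G_n(\mathfrak{M}_1(n),\mathfrak{M}_2(n))=h(\theta_1,\theta_2)$. *)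

theory Defs
  imports "HOL-Analysis.Analysis"
begin

definition Dn :: "nat \<Rightarrow> (real \<times> real) set" where
  "Dn n = {(x, y). 0 \<le> x \<and> x \<le> real n \<and> 0 \<le> y \<and> y \<le> real n \<and> x \<le> y}"

definition Tri :: "(real \<times> real) set" where
  "Tri = {(x, y). 0 \<le> x \<and> x \<le> y \<and> y \<le> 1}"

end

theory Submission
  imports Defs
begin

lemma argmax_conv:
  fixes h :: "real \<times> real \<Rightarrow> real"
  assumes K: "compact K" and hc: "continuous_on K h" and th: "\<theta> \<in> K"
    and mx: "\<And>p. p \<in> K \<Longrightarrow> h p \<le> h \<theta>"
    and un: "\<And>p. p \<in> K \<Longrightarrow> h p = h \<theta> \<Longrightarrow> p = \<theta>"
    and PK: "eventually (\<lambda>n. P n \<in> K) sequentially"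
    and hP: "(\<lambda>n. h (P n)) \<longlonglongrightarrow> h \<theta>"
  shows "P \<longlonglongrightarrow> \<theta>"
proof (rule tendstoI)
  fix e :: real assume e: "e > 0"
  define K' where "K' = K \<inter> - ball \<theta> e"
  have cK': "compact K'" unfolding K'_def
    by (rule compact_Int_closed[OF K]) (simp add: closed_Compl)
  show "eventually (\<lambda>n. dist (P n) \<theta> < e) sequentially"
  proof (cases "K' = {}")
    case True
    show ?thesis using PK
      by eventually_elim (use True in \<open>auto simp: K'_def dist_commute\<close>)
  next
    case False
    have "continuous_on K' h" using hc unfolding K'_def by (rule continuous_on_subset) auto
    then obtain x where x: "x \<in> K'" and xm: "\<And>y. y \<in> K' \<Longrightarrow> h y \<le> h x"
      using continuous_attains_sup[OF cK' False] by blast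
    have "x \<noteq> \<theta>" using x e by (auto simp: K'_def)
    moreover have "x \<in> K" using x by (auto simp: K'_def)
    ultimately have "h x < h \<theta>" using mx[of x] un[of x] by fastforce
    then have ev: "eventually (\<lambda>n. h (P n) > h x) sequentially"
      using order_tendstoD(1)[OF hP] by blast
    show ?thesis using ev PK
    proof eventually_elim
      case (elim n)
      then have "P n \<notin> K'" using xm[of "P n"] by (metis not_le)
      then show ?case using elim by (auto simp: K'_def dist_commute)
    qed
  qed
qed

lemma ratio_lim:
  fixes a b :: "nat \<Rightarrow> real"
  assumes r: "(\<lambda>n. a n / b n) \<longlonglongrightarrow> 1" and bl: "(\<lambda>n. b n / real n) \<longlonglongrightarrow> t"
  shows "(\<lambda>n. a n / real n) \<longlonglongrightarrow> t"
proof -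
  have "eventually (\<lambda>n. a n / b n > 1/2) sequentially"
    using order_tendstoD(1)[OF r, of "1/2"] by simp
  then have ev: "eventually (\<lambda>n. (a n / b n) * (b n / real n) = a n / real n) sequentially"
    by eventually_elim (cases "b n = 0"; auto)
  have "(\<lambda>n. (a n / b n) * (b n / real n)) \<longlonglongrightarrow> 1 * t"
    by (rule tendsto_mult[OF r bl])
  then show ?thesis using Lim_transform_eventually[OF _ ev] by simp
qed

theorem proposition2:
  fixes G :: "nat \<Rightarrow> real \<times> real \<Rightarrow> real"
    and M :: "nat \<Rightarrow> real \<times> real"
    and h :: "real \<times> real \<Rightarrow> real"
    and \<theta> :: "real \<times> real"
  assumes G_cont: "\<And>n. continuous_on (Dn n) (G n)"
    and M_in: "\<And>n. M n \<in> Dn n"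
    and M_max: "\<And>n p. p \<in> Dn n \<Longrightarrow> G n p \<le> G n (M n)"
    and unif: "uniform_limit Tri (\<lambda>n p. G n (real n * fst p, real n * snd p)) h sequentially"
    and \<theta>_in: "\<theta> \<in> Tri"
    and \<theta>_max: "\<And>p. p \<in> Tri \<Longrightarrow> h p \<le> h \<theta>"
    and \<theta>_unique: "\<And>p. p \<in> Tri \<Longrightarrow> h p = h \<theta> \<Longrightarrow> p = \<theta>"
  shows "((\<lambda>n. fst (M n) / real n) \<longlonglongrightarrow> fst \<theta>) \<and>
         ((\<lambda>n. snd (M n) / real n) \<longlonglongrightarrow> snd \<theta>) \<and>
         ((\<lambda>n. G n (M n)) \<longlonglongrightarrow> h \<theta>) \<and>
         (\<forall>M'. (\<forall>n. M' n \<in> Dn n) \<longrightarrow>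
            ((\<lambda>n. fst (M' n) / fst (M n)) \<longlonglongrightarrow> 1) \<longrightarrow>
            ((\<lambda>n. snd (M' n) / snd (M n)) \<longlonglongrightarrow> 1) \<longrightarrow>
            ((\<lambda>n. G n (M' n)) \<longlonglongrightarrow> h \<theta>))"
proof -
  define f where "f = (\<lambda>n p. G n (real n * fst p, real n * snd p))"
  define sc where "sc = (\<lambda>n (q::real\<times>real). (fst q / real n, snd q / real n))"
  have scT: "sc n q \<in> Tri" "f n (sc n q) = G n q" if "n > 0" "q \<in> Dn n" for n q
    using that by (auto simp: sc_def Tri_def Dn_def f_def divide_le_eq_1 divide_right_mono)
  have TD: "(real n * fst p, real n * snd p) \<in> Dn n" if "p \<in> Tri" for n p
    using that by (auto simp: Tri_def Dn_def mult_left_mono intro: mult_left_le)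
  have fcont: "continuous_on Tri (f n)" for n
    unfolding f_def
    by (rule continuous_on_compose2[OF G_cont[of n]]) (auto intro!: continuous_intros TD)
  have hcont: "continuous_on Tri h"
    by (rule uniform_limit_theorem[OF _ unif]) (auto simp: fcont[unfolded f_def])
  have Tri_eq: "Tri = ({0..1} \<times> {0..1}) \<inter> {p. fst p \<le> snd p}"
    by (auto simp: Tri_def)
  have cT: "compact Tri" unfolding Tri_eq
    by (rule compact_Int_closed) (auto intro!: compact_Times closed_Collect_le continuous_intros)
  have U: "eventually (\<lambda>n. \<forall>p\<in>Tri. dist (f n p) (h p) < e) sequentially" if "e > 0" for e
    using unif that unfolding uniform_limit_iff f_def by blast
  have pos: "eventually (\<lambda>n. n > (0::nat)) sequentially" by (rule eventually_gt_at_top)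
  define P where "P = (\<lambda>n. sc n (M n))"
  have PT: "eventually (\<lambda>n. P n \<in> Tri) sequentially"
    using pos by eventually_elim (simp add: P_def scT M_in)
  have both: "eventually (\<lambda>n. dist (G n (M n)) (h \<theta>) < e \<and> dist (h (P n)) (h \<theta>) < e) sequentially"
    if e: "e > 0" for e
  proof -
    have "e/2 > 0" using e by simp
    show ?thesis using U[OF \<open>e/2 > 0\<close>] pos
    proof eventually_elim
      case (elim n)
      have PnT: "P n \<in> Tri" and fP: "f n (P n) = G n (M n)"
        using scT[OF elim(2) M_in] by (auto simp: P_def)
      have a: "\<bar>f n (P n) - h (P n)\<bar> < e/2" using elim(1) PnT by (auto simp: dist_real_def)
      have b: "\<bar>f n \<theta> - h \<theta>\<bar> < e/2" using elim(1) \<theta>_in by (auto simp: dist_real_def)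
      have c: "f n \<theta> \<le> G n (M n)" unfolding f_def using M_max[OF TD[OF \<theta>_in]] .
      have d: "h (P n) \<le> h \<theta>" using \<theta>_max PnT by blast
      show ?case using a b c d fP e unfolding dist_real_def abs_less_iff by (simp add: abs_less_iff)
    qed
  qed
  have ii: "(\<lambda>n. G n (M n)) \<longlonglongrightarrow> h \<theta>"
    by (rule tendstoI) (rule eventually_mono[OF both], auto)
  have hP: "(\<lambda>n. h (P n)) \<longlonglongrightarrow> h \<theta>"
    by (rule tendstoI) (rule eventually_mono[OF both], auto)
  have Pl: "P \<longlonglongrightarrow> \<theta>"
    by (rule argmax_conv[OF cT hcont \<theta>_in \<theta>_max \<theta>_unique PT hP])
  have i1: "(\<lambda>n. fst (M n) / real n) \<longlonglongrightarrow> fst \<theta>"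
    using tendsto_fst[OF Pl] by (simp add: P_def sc_def)
  have i2: "(\<lambda>n. snd (M n) / real n) \<longlonglongrightarrow> snd \<theta>"
    using tendsto_snd[OF Pl] by (simp add: P_def sc_def)
  have iii: "(\<lambda>n. G n (M' n)) \<longlonglongrightarrow> h \<theta>"
    if M'in: "\<forall>n. M' n \<in> Dn n" and r1: "(\<lambda>n. fst (M' n) / fst (M n)) \<longlonglongrightarrow> 1"
      and r2: "(\<lambda>n. snd (M' n) / snd (M n)) \<longlonglongrightarrow> 1" for M'
  proof -
    define Q where "Q = (\<lambda>n. sc n (M' n))"
    have "(\<lambda>n. (fst (M' n) / real n, snd (M' n) / real n)) \<longlonglongrightarrow> (fst \<theta>, snd \<theta>)"
      by (intro tendsto_Pair ratio_lim[OF r1 i1] ratio_lim[OF r2 i2])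
    then have Ql: "Q \<longlonglongrightarrow> \<theta>" by (simp add: Q_def sc_def)
    have QT: "eventually (\<lambda>n. Q n \<in> Tri) sequentially"
      using pos by eventually_elim (simp add: Q_def scT M'in)
    have hQ: "(\<lambda>n. h (Q n)) \<longlonglongrightarrow> h \<theta>"
      by (rule continuous_on_tendsto_compose[OF hcont Ql \<theta>_in QT])
    have dif: "(\<lambda>n. f n (Q n) - h (Q n)) \<longlonglongrightarrow> 0"
    proof (rule tendstoI)
      fix e :: real assume "e > 0"
      show "eventually (\<lambda>n. dist (f n (Q n) - h (Q n)) 0 < e) sequentially"
        using U[OF \<open>e > 0\<close>] QT by eventually_elim (auto simp: dist_real_def)
    qed
    have "(\<lambda>n. (f n (Q n) - h (Q n)) + h (Q n)) \<longlonglongrightarrow> 0 + h \<theta>"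
      by (rule tendsto_add[OF dif hQ])
    then have "(\<lambda>n. f n (Q n)) \<longlonglongrightarrow> h \<theta>" by simp
    moreover have "eventually (\<lambda>n. f n (Q n) = G n (M' n)) sequentially"
      using pos by eventually_elim (simp add: Q_def scT M'in)
    ultimately show ?thesis by (rule Lim_transform_eventually)
  qed
  show ?thesis using i1 i2 ii iii by blast
qed

end
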